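(* There exist constants $a,b>0$ such that for every integer $R\ge2$, $$\frac{a}{R}<\pi-\Vert T_R\Vert<\frac{b\log R}{R}.$$
   Context: $T_R$ is the $R\times R$ matrix with $(T_R)_{m,n}=0$ if $m=n$ and $(T_R)_{m,n}=\frac{1}{m-n}$ if $m\ne n$, $1\le m,n\le R$. $\Vert\cdot\Vert$ is the operator norm induced by the Euclidean norm on $\mathbb{C}^R$. *)

theory Defs
  imports "HOL-Analysis.Analysis"
begin

definition T_entry :: "nat \<Rightarrow> nat \<Rightarrow> complex" where
  "T_entry m n = (if m = n then 0 else complex_of_real (1 / (real m - real n)))"

text \<open>Euclidean norm of a vector in C^R, represented as a function on the indices 1..R.\<close>
definition vec_norm2 :: "nat \<Rightarrow> (nat \<Rightarrow> complex) \<Rightarrow> real" where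
  "vec_norm2 R x = sqrt (\<Sum>n=1..R. (cmod (x n))^2)"

definition T_apply :: "nat \<Rightarrow> (nat \<Rightarrow> complex) \<Rightarrow> (nat \<Rightarrow> complex)" where
  "T_apply R x = (\<lambda>m. \<Sum>n=1..R. T_entry m n * x n)"

definition T_opnorm :: "nat \<Rightarrow> real" where
  "T_opnorm R = Sup {vec_norm2 R (T_apply R x) | x. vec_norm2 R x = 1}"

end

theory Submission
  imports Defs "HOL-Computational_Algebra.Polynomial"
begin

lemma sin_lower: fixes x :: real assumes "0 \<le> x" shows "x - x^3/6 \<le> sin x"
proof -
  have "\<bar>sin x - (\<Sum>m<3. sin_coeff m * x ^ m)\<bar> \<le> inverse (fact 3) * \<bar>x\<bar> ^ 3"
    by (rule Maclaurin_sin_bound)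
  moreover have "(\<Sum>m<3. sin_coeff m * x ^ m) = x"
    by (simp add: numeral_3_eq_3 sin_coeff_def)
  ultimately show ?thesis using assms by (simp add: fact_numeral abs_if split: if_splits)
qed

lemma cos_lower: "1 - x^2/2 \<le> cos (x::real)"
proof -
  have "cos x = cos (2*(x/2))" by simp
  also have "\<dots> = 1 - 2 * (sin (x/2))^2" by (rule cos_double_sin)
  finally have e: "cos x = 1 - 2 * (sin (x/2))^2" .
  have "\<bar>sin (x/2)\<bar> \<le> \<bar>x/2\<bar>" by (rule abs_sin_x_le_abs_x)
  hence "(sin (x/2))^2 \<le> (x/2)^2"
    by (metis abs_ge_zero power2_abs power_mono)
  thus ?thesis using e by (simp add: power_divide)
qed

lemma cot_bound_pos: fixes b :: real assumes "0 < b" "b \<le> 1" shows "\<bar>cos b / sin b - 1/b\<bar> \<le> b"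
proof -
  have s1: "sin b \<le> b" using assms by (simp add: sin_x_le_x)
  have s2: "b - b^3/6 \<le> sin b" using assms sin_lower by simp
  have c1: "1 - b^2/2 \<le> cos b" by (rule cos_lower)
  have c2: "cos b \<le> 1" by simp
  have bb: "b*b \<le> 1" using assms by (simp add: mult_le_one)
  have b3: "b^3 \<le> b" using mult_left_mono[OF bb, of b] assms by (simp add: power3_eq_cube)
  have sp: "5/6 * b \<le> sin b" using s2 assms
    proof -
      have "b^3/6 \<le> b/6" using b3 by simp
      thus ?thesis using s2 by simp
    qed
  have spos: "sin b > 0" using sp assms by simp
  have eq: "cos b / sin b - 1/b = (b * cos b - sin b) / (b * sin b)"
    using spos assms by (simp add: field_simps)
  have n1: "b * cos b - sin b \<le> b^3/6"
  proof -
    have "b * cos b \<le> b" using c2 assms by (simp add: mult_le_cancel_left1)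
    thus ?thesis using s2 by simp
  qed
  have n2: "- (b^3/2) \<le> b * cos b - sin b"
  proof -
    have "b * (1 - b^2/2) \<le> b * cos b" using c1 assms by (simp add: mult_left_mono)
    hence "b - b^3/2 \<le> b * cos b" by (simp add: algebra_simps power3_eq_cube power2_eq_square)
    thus ?thesis using s1 by simp
  qed
  have na: "\<bar>b * cos b - sin b\<bar> \<le> b^3/2" proof -
    have "0 \<le> b^3" using assms by simp
    thus ?thesis using n1 n2 unfolding abs_le_iff by linarith
  qed
  have den: "5/6 * b^2 \<le> b * sin b" using sp assms by (simp add: power2_eq_square mult_left_mono)
  have dpos: "0 < b * sin b" using spos assms by simp
  have "\<bar>cos b / sin b - 1/b\<bar> = \<bar>b * cos b - sin b\<bar> / (b * sin b)"
    by (simp only: eq abs_divide abs_of_pos[OF dpos])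
  also have "\<dots> \<le> (b^3/2) / (5/6 * b^2)"
  proof (rule frac_le)
    show "0 \<le> b^3/2" using assms by simp
    show "\<bar>b * cos b - sin b\<bar> \<le> b^3/2" by (rule na)
    show "0 < 5/6 * b^2" using assms by simp
    show "5/6 * b^2 \<le> b * sin b" by (rule den)
  qed
  also have "\<dots> = 3/5 * b" using assms by (simp add: power2_eq_square power3_eq_cube field_simps)
  also have "\<dots> \<le> b" using assms by simp
  finally show ?thesis .
qed

lemma cot_bound: fixes b :: real assumes "b \<noteq> 0" "\<bar>b\<bar> \<le> 1" shows "\<bar>cos b / sin b - 1/b\<bar> \<le> \<bar>b\<bar>"
proof (cases "b > 0")
  case True thus ?thesis using cot_bound_pos assms by auto
next
  case False
  hence "0 < -b" "-b \<le> 1" using assms by auto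
  from cot_bound_pos[OF this] show ?thesis using False
    by (simp add: abs_minus_commute)
qed


definition ee :: "nat \<Rightarrow> nat \<Rightarrow> complex" where "ee N k = cis (2*pi*real k/real N)"

lemma ee_pow: "ee N j ^ n = ee N (j*n)"
  unfolding ee_def Complex.DeMoivre by (rule arg_cong[where f=cis]) (simp add: field_simps)

lemma cmod_ee [simp]: "cmod (ee N k) = 1"
  by (simp add: ee_def)

lemma cis_ne_1:
  fixes t :: real
  assumes "t \<noteq> 0" "\<bar>t\<bar> < 1"
  shows "cis (2*pi*t) \<noteq> 1"
proof
  assume "cis (2*pi*t) = 1"
  hence "cos (2*pi*t) = 1" by (metis Re_complex_of_real cis.sel(1) of_real_1)
  then obtain i :: int where i: "2*pi*t = real_of_int i * 2 * pi" using cos_one_2pi_int by blast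
  hence "t = real_of_int i" by simp
  with assms show False by (cases "i = 0") auto
qed

lemma orth_gen:
  assumes "a < N" "b < N"
  shows "(\<Sum>j<N. ee N (j*a) * cnj (ee N (j*b))) = (if a = b then of_nat N else 0)"
proof -
  define z where "z = cis (2*pi*((real a - real b)/real N))"
  have N: "N > 0" using assms by auto
  have zj: "ee N (j*a) * cnj (ee N (j*b)) = z ^ j" for j
    unfolding ee_def z_def cis_cnj Complex.DeMoivre cis_mult
    by (rule arg_cong[where f=cis]) (use N in \<open>simp add: field_simps\<close>)
  show ?thesis
  proof (cases "a = b")
    case True
    hence "z = 1" by (simp add: z_def)
    thus ?thesis using True zj by simp
  next
    case False
    have "z \<noteq> 1" unfolding z_def
      by (rule cis_ne_1) (use False assms N in \<open>auto simp: abs_less_iff field_simps\<close>)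
    moreover have "z ^ N = 1"
    proof -
      have e1: "real N * (2*pi*((real a - real b)/real N)) = 2*pi*(real_of_int (int a - int b))"
        using N by simp
      have "z ^ N = cis (real N * (2*pi*((real a - real b)/real N)))"
        unfolding z_def Complex.DeMoivre ..
      also have "\<dots> = cis (2*pi*(real_of_int (int a - int b)))" by (simp only: e1)
      also have "\<dots> = 1" by (rule cis_multiple_2pi) simp
      finally show ?thesis .
    qed
    ultimately have "(\<Sum>j<N. z ^ j) = 0" by (simp add: geometric_sum)
    thus ?thesis using False zj by simp
  qed
qed

lemma orth_gen':
  assumes "a < N" "b < N"
  shows "(\<Sum>j<N. ee N (a*j) * cnj (ee N (b*j))) = (if a = b then of_nat N else 0)"
  using orth_gen[OF assms] by (simp add: mult.commute)

lemma swap3: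
  fixes g :: "'a \<Rightarrow> 'b \<Rightarrow> 'd::comm_semiring_1"
  shows "(\<Sum>m\<in>M. \<Sum>j\<in>J. \<Sum>j'\<in>J'. g j j' * f j j' m) = (\<Sum>j\<in>J. \<Sum>j'\<in>J'. g j j' * (\<Sum>m\<in>M. f j j' m))"
proof -
  have "(\<Sum>j\<in>J. \<Sum>j'\<in>J'. g j j' * (\<Sum>m\<in>M. f j j' m)) = (\<Sum>j\<in>J. \<Sum>j'\<in>J'. \<Sum>m\<in>M. g j j' * f j j' m)"
    by (simp add: sum_distrib_left)
  also have "\<dots> = (\<Sum>j\<in>J. \<Sum>m\<in>M. \<Sum>j'\<in>J'. g j j' * f j j' m)"
    by (rule sum.cong[OF refl]) (rule sum.swap)
  also have "\<dots> = (\<Sum>m\<in>M. \<Sum>j\<in>J. \<Sum>j'\<in>J'. g j j' * f j j' m)"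
    by (rule sum.swap)
  finally show ?thesis by simp
qed

definition dft :: "nat \<Rightarrow> nat \<Rightarrow> (nat \<Rightarrow> complex) \<Rightarrow> nat \<Rightarrow> complex" where
  "dft N R x j = (\<Sum>n=1..R. x n * ee N (j*n))"

lemma sq_cmod: "complex_of_real ((cmod z)^2) = z * cnj z"
  by (rule complex_norm_square)

lemma prod_sums: "(\<Sum>j\<in>A. f j) * cnj (\<Sum>j\<in>A. f j) = (\<Sum>j\<in>A. \<Sum>j'\<in>A. f j * cnj (f j'))"
  by (simp add: sum_product cnj_sum)

lemma parseval:
  assumes "R < N"
  shows "(\<Sum>j<N. (cmod (dft N R x j))^2) = real N * (\<Sum>n=1..R. (cmod (x n))^2)"
proof -
  have "complex_of_real (\<Sum>j<N. (cmod (dft N R x j))^2)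
      = (\<Sum>j<N. dft N R x j * cnj (dft N R x j))" by (simp only: of_real_sum sq_cmod)
  also have "\<dots> = (\<Sum>j<N. \<Sum>n=1..R. \<Sum>n'=1..R. x n * cnj (x n') * (ee N (j*n) * cnj (ee N (j*n'))))"
    unfolding dft_def prod_sums by (simp add: algebra_simps)
  also have "\<dots> = (\<Sum>n=1..R. \<Sum>n'=1..R. x n * cnj (x n') * (\<Sum>j<N. ee N (j*n) * cnj (ee N (j*n'))))"
    by (rule swap3)
  also have "\<dots> = (\<Sum>n=1..R. \<Sum>n'=1..R. x n * cnj (x n') * (if n = n' then of_nat N else 0))"
    by (intro sum.cong refl, subst orth_gen) (use assms in auto)
  also have "\<dots> = (\<Sum>n=1..R. of_nat N * (x n * cnj (x n)))"
    by (simp add: if_distrib sum.delta mult.commute cong: if_cong)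
  also have "\<dots> = complex_of_real (real N * (\<Sum>n=1..R. (cmod (x n))^2))"
    unfolding of_real_mult of_real_sum sq_cmod by (simp add: sum_distrib_left)
  finally show ?thesis by (simp only: of_real_eq_iff)
qed

lemma parseval_full:
  assumes "0 < N"
  shows "(\<Sum>m<N. (cmod ((1/of_nat N) * (\<Sum>j<N. Y j * cnj (ee N (j*m)))))^2)
         = (1/real N) * (\<Sum>j<N. (cmod (Y j))^2)"
proof -
  let ?c = "1 / complex_of_nat N"
  have cc: "?c * cnj ?c = complex_of_real (1/real N^2)" by (simp add: power2_eq_square)
  have "complex_of_real (\<Sum>m<N. (cmod (?c * (\<Sum>j<N. Y j * cnj (ee N (j*m)))))^2)
     = (\<Sum>m<N. (?c * (\<Sum>j<N. Y j * cnj (ee N (j*m)))) * cnj (?c * (\<Sum>j<N. Y j * cnj (ee N (j*m)))))"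
    by (simp only: of_real_sum sq_cmod)
  also have "\<dots> = (\<Sum>m<N. ?c * cnj ?c * (\<Sum>j<N. \<Sum>j'<N. Y j * cnj (Y j') * (ee N (j'*m) * cnj (ee N (j*m)))))"
  proof (rule sum.cong[OF refl])
    fix m
    have "(?c * (\<Sum>j<N. Y j * cnj (ee N (j*m)))) * cnj (?c * (\<Sum>j<N. Y j * cnj (ee N (j*m))))
       = ?c * cnj ?c * ((\<Sum>j<N. Y j * cnj (ee N (j*m))) * cnj (\<Sum>j<N. Y j * cnj (ee N (j*m))))"
      by (simp only: complex_cnj_mult mult_ac)
    also have "\<dots> = ?c * cnj ?c * (\<Sum>j<N. \<Sum>j'<N. Y j * cnj (Y j') * (ee N (j'*m) * cnj (ee N (j*m))))"
      unfolding prod_sums by (simp add: mult_ac)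
    finally show "(?c * (\<Sum>j<N. Y j * cnj (ee N (j*m)))) * cnj (?c * (\<Sum>j<N. Y j * cnj (ee N (j*m))))
       = ?c * cnj ?c * (\<Sum>j<N. \<Sum>j'<N. Y j * cnj (Y j') * (ee N (j'*m) * cnj (ee N (j*m))))" .
  qed
  also have "\<dots> = ?c * cnj ?c * (\<Sum>j<N. \<Sum>j'<N. Y j * cnj (Y j') * (\<Sum>m<N. ee N (j'*m) * cnj (ee N (j*m))))"
    by (simp only: sum_distrib_left[symmetric] swap3)
  also have "\<dots> = ?c * cnj ?c * (\<Sum>j<N. \<Sum>j'<N. Y j * cnj (Y j') * (if j' = j then of_nat N else 0))"
    by (intro arg_cong[where f="\<lambda>t. ?c * cnj ?c * t"] sum.cong refl, subst orth_gen') auto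
  also have "\<dots> = ?c * cnj ?c * (of_nat N * (\<Sum>j<N. Y j * cnj (Y j)))"
    by (simp add: if_distrib sum.delta sum_distrib_left mult_ac cong: if_cong)
  also have "\<dots> = complex_of_real ((1/real N) * (\<Sum>j<N. (cmod (Y j))^2))"
    unfolding cc of_real_mult of_real_sum sq_cmod using assms by (simp add: power2_eq_square)
  finally show ?thesis by (simp only: of_real_eq_iff)
qed

lemma bessel:
  assumes "R < N"
  shows "(\<Sum>m=1..R. (cmod ((1/of_nat N) * (\<Sum>j<N. Y j * cnj (ee N (j*m)))))^2)
         \<le> (1/real N) * (\<Sum>j<N. (cmod (Y j))^2)"
proof -
  have "(\<Sum>m=1..R. (cmod ((1/of_nat N) * (\<Sum>j<N. Y j * cnj (ee N (j*m)))))^2)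
     \<le> (\<Sum>m<N. (cmod ((1/of_nat N) * (\<Sum>j<N. Y j * cnj (ee N (j*m)))))^2)"
    by (rule sum_mono2) (use assms in auto)
  also have "\<dots> = (1/real N) * (\<Sum>j<N. (cmod (Y j))^2)" by (rule parseval_full) (use assms in auto)
  finally show ?thesis .
qed


lemma ee_prod_pow:
  assumes "N > 0"
  shows "ee N (j*n) * cnj (ee N (j*m)) = cis (2*pi*((real n - real m)/real N)) ^ j"
  unfolding ee_def cis_cnj Complex.DeMoivre cis_mult
  by (rule arg_cong[where f=cis]) (use assms in \<open>simp add: field_simps\<close>)

lemma root_pow_N:
  assumes "N > 0"
  shows "cis (2*pi*((real n - real m)/real N)) ^ N = 1"
proof -
  have e1: "real N * (2*pi*((real n - real m)/real N)) = 2*pi*(real_of_int (int n - int m))"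
    using assms by simp
  have "cis (2*pi*((real n - real m)/real N)) ^ N = cis (real N * (2*pi*((real n - real m)/real N)))"
    unfolding Complex.DeMoivre ..
  also have "\<dots> = cis (2*pi*(real_of_int (int n - int m)))" by (simp only: e1)
  also have "\<dots> = 1" by (rule cis_multiple_2pi) simp
  finally show ?thesis .
qed

lemma wsum_aux:
  fixes z :: complex
  shows "(1 - z) * (\<Sum>j<n. of_nat j * z^j) + 1 + of_nat n * z^n = (\<Sum>j<Suc n. z^j)"
proof (induction n)
  case 0 thus ?case by simp
next
  case (Suc n)
  have "(1 - z) * (\<Sum>j<Suc n. of_nat j * z^j) + 1 + of_nat (Suc n) * z^(Suc n)
      = ((1 - z) * (\<Sum>j<n. of_nat j * z^j) + 1 + of_nat n * z^n) + z^(Suc n)"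
    by (simp add: algebra_simps)
  also have "\<dots> = (\<Sum>j<Suc (Suc n). z^j)" using Suc.IH by simp
  finally show ?case .
qed

lemma wsum:
  fixes z :: complex
  assumes "z ^ N = 1" "z \<noteq> 1"
  shows "(\<Sum>j<N. of_nat j * z^j) = of_nat N / (z - 1)"
proof -
  have g: "(\<Sum>j<N. z^j) = 0" using assms by (simp add: geometric_sum)
  have "(\<Sum>j<Suc N. z^j) = 1" using g assms(1) by simp
  hence "(1 - z) * (\<Sum>j<N. of_nat j * z^j) + 1 + of_nat N = 1"
    using wsum_aux[of z N] assms(1) by simp
  hence "(z - 1) * (\<Sum>j<N. of_nat j * z^j) = of_nat N" by (simp add: algebra_simps)
  thus ?thesis using assms(2) by (simp add: field_simps)
qed

lemma gauss_c: "2 * (\<Sum>j<n. (of_nat j :: complex)) = of_nat n * (of_nat n - 1)"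
  by (induction n) (simp_all add: algebra_simps)

definition mu :: "nat \<Rightarrow> nat \<Rightarrow> complex" where
  "mu N j = (if j = 0 then 0 else \<i> * of_real (pi * (real N - 2*real j)/real N))"

definition cC :: "nat \<Rightarrow> nat \<Rightarrow> nat \<Rightarrow> complex" where
  "cC N m n = (1/of_nat N) * (\<Sum>j<N. mu N j * (ee N (j*n) * cnj (ee N (j*m))))"

lemma mu_alt: "N > 0 \<Longrightarrow> mu N j = \<i> * of_real pi / of_nat N * (of_nat N - 2 * of_nat j) - (if j = 0 then \<i> * of_real pi else 0)"
  by (simp add: mu_def field_simps)

lemma sum_mu_pow:
  assumes "N > 0"
  shows "(\<Sum>j<N. mu N j * z^j) = \<i> * of_real pi / of_nat N * (of_nat N * (\<Sum>j<N. z^j) - 2 * (\<Sum>j<N. of_nat j * z^j)) - \<i> * of_real pi"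
proof -
  let ?K = "\<i> * of_real pi / of_nat N :: complex"
  have "(\<Sum>j<N. mu N j * z^j) = (\<Sum>j<N. ?K * (of_nat N * z^j) - ?K * (2 * (of_nat j * z^j)) - (if j = 0 then \<i> * of_real pi else 0))"
    by (rule sum.cong[OF refl]) (simp add: mu_alt[OF assms] algebra_simps)
  also have "\<dots> = (\<Sum>j<N. ?K * (of_nat N * z^j)) - (\<Sum>j<N. ?K * (2 * (of_nat j * z^j))) - (\<Sum>j<N. (if j = 0 then \<i> * of_real pi else 0))"
    by (simp only: sum_subtractf)
  also have "(\<Sum>j<N. (if j = 0 then \<i> * of_real pi else 0)) = \<i> * of_real pi"
    using assms by simp
  also have "(\<Sum>j<N. ?K * (of_nat N * z^j)) - (\<Sum>j<N. ?K * (2 * (of_nat j * z^j))) = ?K * (of_nat N * (\<Sum>j<N. z^j) - 2 * (\<Sum>j<N. of_nat j * z^j))"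
    by (simp only: sum_distrib_left[symmetric] right_diff_distrib)
  finally show ?thesis .
qed

lemma cC_diag:
  assumes "N > 0" shows "cC N m m = 0"
proof -
  have "(\<Sum>j<N. mu N j * (ee N (j*m) * cnj (ee N (j*m)))) = (\<Sum>j<N. mu N j * 1^j)"
    by (rule sum.cong[OF refl]) (simp add: ee_prod_pow[OF assms])
  also have "\<dots> = \<i> * of_real pi / of_nat N * (of_nat N * of_nat N - 2 * (\<Sum>j<N. of_nat j)) - \<i> * of_real pi"
    by (subst sum_mu_pow[OF assms]) simp
  also have "\<dots> = 0" using assms by (simp add: gauss_c field_simps)
  finally show ?thesis by (simp add: cC_def)
qed

lemma cot_identity:
  fixes a :: real
  assumes "sin a \<noteq> 0"
  shows "- \<i> * of_real pi * (cis (2*a) + 1) / (cis (2*a) - 1) = - of_real (pi * cos a / sin a)"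
proof -
  have z1: "cis (2*a) \<noteq> 1"
  proof
    assume "cis (2*a) = 1"
    hence "sin (2*a) = 0" "cos (2*a) = 1" by (metis cis.sel(2) Im_complex_of_real of_real_1, metis cis.sel(1) Re_complex_of_real of_real_1)
    hence "sin a * sin a = 0" by (simp add: cos_double_sin power2_eq_square)
    thus False using assms by simp
  qed
  hence nz: "cis (2*a) - 1 \<noteq> 0" by simp
  have re: "- (2 * sin a * cos a * sin a) = ((cos a)^2 - (sin a)^2 - 1) * cos a"
  proof -
    have h: "(cos a)^2 - (sin a)^2 - 1 = - 2 * (sin a)^2" using sin_cos_squared_add[of a] by linarith
    show ?thesis unfolding h by (simp add: power2_eq_square)
  qed
  have im: "((cos a)^2 - (sin a)^2 + 1) * sin a = 2 * sin a * cos a * cos a"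
  proof -
    have h: "(cos a)^2 - (sin a)^2 + 1 = 2 * (cos a)^2" using sin_cos_squared_add[of a] by linarith
    show ?thesis unfolding h by (simp add: power2_eq_square)
  qed
  have key: "\<i> * (cis (2*a) + 1) * of_real (sin a) = (cis (2*a) - 1) * of_real (cos a)"
  proof -
    have cz: "cis (2*a) = Complex ((cos a)^2 - (sin a)^2) (2 * sin a * cos a)"
      by (simp add: complex_eq_iff cos_double sin_double)
    show ?thesis unfolding cz complex_eq_iff using re im by (simp add: algebra_simps)
  qed
  have sn: "complex_of_real (sin a) \<noteq> 0" using assms by simp
  have cross: "(- \<i> * of_real pi * (cis (2*a) + 1)) * of_real (sin a) = (- of_real (pi * cos a)) * (cis (2*a) - 1)"
  proof -
    have "(- \<i> * of_real pi * (cis (2*a) + 1)) * of_real (sin a) = - of_real pi * (\<i> * (cis (2*a) + 1) * of_real (sin a))"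
      by (simp only: mult_ac mult_minus_left mult_minus_right)
    also have "\<dots> = - of_real pi * ((cis (2*a) - 1) * of_real (cos a))" by (simp only: key)
    also have "\<dots> = (- of_real (pi * cos a)) * (cis (2*a) - 1)" by (simp only: mult_ac mult_minus_left of_real_mult)
    finally show ?thesis .
  qed
  have "(- \<i> * of_real pi * (cis (2*a) + 1)) / (cis (2*a) - 1) = (- of_real (pi * cos a)) / of_real (sin a)"
    using cross nz sn by (simp add: frac_eq_eq)
  thus ?thesis by simp

qed

lemma cC_off:
  assumes "m < N" "n < N" "m \<noteq> n"
  shows "cC N m n = of_real (pi / real N * (cos (pi * (real m - real n) / real N) / sin (pi * (real m - real n) / real N)))"
proof -
  have N: "N > 0" using assms by auto
  define a where "a = pi * ((real n - real m) / real N)"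
  define z where "z = cis (2*pi*((real n - real m)/real N))"
  have za: "z = cis (2*a)" by (simp add: z_def a_def mult.assoc)
  have t1: "(real n - real m) / real N \<noteq> 0" "\<bar>(real n - real m) / real N\<bar> < 1"
    using assms N by (auto simp: abs_less_iff field_simps)
  have z1: "z \<noteq> 1" unfolding z_def by (rule cis_ne_1[OF t1])
  have zN: "z ^ N = 1" unfolding z_def by (rule root_pow_N[OF N])
  have sa: "sin a \<noteq> 0"
  proof
    assume "sin a = 0"
    moreover have "\<bar>a\<bar> < pi"
    proof -
      have "\<bar>a\<bar> = pi * \<bar>(real n - real m)/real N\<bar>" unfolding a_def by (simp only: abs_mult) simp
      also have "\<dots> < pi * 1" using t1(2) pi_gt_zero by (intro mult_strict_left_mono)
      finally show ?thesis by simp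
    qed
    ultimately have "a = 0" using sin_zero_pi_iff by blast
    thus False using t1(1) unfolding a_def by simp
  qed
  have "(\<Sum>j<N. mu N j * (ee N (j*n) * cnj (ee N (j*m)))) = (\<Sum>j<N. mu N j * z^j)"
    by (rule sum.cong[OF refl]) (simp add: ee_prod_pow[OF N] z_def)
  also have "\<dots> = \<i> * of_real pi / of_nat N * (of_nat N * 0 - 2 * (of_nat N / (z - 1))) - \<i> * of_real pi"
    unfolding sum_mu_pow[OF N] wsum[OF zN z1] using zN z1 by (simp add: geometric_sum)
  also have "\<dots> = - \<i> * of_real pi * (z + 1) / (z - 1)"
    using N z1 by (simp add: field_simps)
  also have "\<dots> = - of_real (pi * cos a / sin a)"
    unfolding za by (rule cot_identity[OF sa])
  finally have S: "(\<Sum>j<N. mu N j * (ee N (j*n) * cnj (ee N (j*m)))) = - of_real (pi * cos a / sin a)" .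
  have ab: "pi * (real m - real n) / real N = - a" unfolding a_def using N by (simp add: field_simps)
  show ?thesis unfolding cC_def S ab by (simp add: field_simps)
qed


lemma vn_L2: "vec_norm2 R x = L2_set (\<lambda>n. cmod (x n)) {1..R}"
  by (simp add: vec_norm2_def L2_set_def)

lemma vn_nonneg: "0 \<le> vec_norm2 R x"
  by (simp add: vn_L2)

lemma vn_add: "vec_norm2 R (\<lambda>m. f m + g m) \<le> vec_norm2 R f + vec_norm2 R g"
proof -
  have "L2_set (\<lambda>m. cmod (f m + g m)) {1..R} \<le> L2_set (\<lambda>m. cmod (f m) + cmod (g m)) {1..R}"
    by (rule L2_set_mono) (auto simp: norm_triangle_ineq)
  also have "\<dots> \<le> L2_set (\<lambda>m. cmod (f m)) {1..R} + L2_set (\<lambda>m. cmod (g m)) {1..R}"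
    by (rule L2_set_triangle_ineq)
  finally show ?thesis by (simp add: vn_L2)
qed

lemma vn_scale: "vec_norm2 R (\<lambda>m. c * f m) = cmod c * vec_norm2 R f"
proof -
  have "cmod c * vec_norm2 R f = L2_set (\<lambda>m. cmod c * cmod (f m)) {1..R}"
    unfolding vn_L2 by (rule L2_set_right_distrib) simp
  thus ?thesis by (simp add: vn_L2 norm_mult)
qed

lemma sum_abs_le: "(\<Sum>n=1..R. cmod (x n)) \<le> sqrt (real R) * vec_norm2 R x"
proof -
  have "(\<Sum>n=1..R. \<bar>cmod (x n)\<bar> * \<bar>1\<bar>) \<le> L2_set (\<lambda>n. cmod (x n)) {1..R} * L2_set (\<lambda>n. 1) {1..R}"
    by (rule L2_set_mult_ineq)
  thus ?thesis by (simp add: vn_L2 L2_set_constant mult.commute)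
qed

lemma inner_le: "cmod (\<Sum>m=1..R. f m * cnj (g m)) \<le> vec_norm2 R f * vec_norm2 R g"
proof -
  have "cmod (\<Sum>m=1..R. f m * cnj (g m)) \<le> (\<Sum>m=1..R. cmod (f m * cnj (g m)))"
    by (rule norm_sum)
  also have "\<dots> = (\<Sum>m=1..R. \<bar>cmod (f m)\<bar> * \<bar>cmod (g m)\<bar>)" by (simp add: norm_mult)
  also have "\<dots> \<le> L2_set (\<lambda>m. cmod (f m)) {1..R} * L2_set (\<lambda>m. cmod (g m)) {1..R}"
    by (rule L2_set_mult_ineq)
  finally show ?thesis by (simp add: vn_L2)
qed

lemma matrix_bound:
  assumes "\<And>m n. m \<in> {1..R} \<Longrightarrow> n \<in> {1..R} \<Longrightarrow> cmod (A m n) \<le> d"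
  shows "vec_norm2 R (\<lambda>m. \<Sum>n=1..R. A m n * x n) \<le> real R * d * vec_norm2 R x"
proof (cases "R = 0")
  case True thus ?thesis by (simp add: vec_norm2_def)
next
  case False
  have d0: "0 \<le> d" using assms[of 1 1] False by (meson atLeastAtMost_iff le_numeral_extra(4) less_one not_less norm_ge_zero order_trans)
  have row: "cmod (\<Sum>n=1..R. A m n * x n) \<le> d * (sqrt (real R) * vec_norm2 R x)" if "m \<in> {1..R}" for m
  proof -
    have "cmod (\<Sum>n=1..R. A m n * x n) \<le> (\<Sum>n=1..R. cmod (A m n) * cmod (x n))"
      by (rule order_trans[OF norm_sum]) (simp add: norm_mult)
    also have "\<dots> \<le> (\<Sum>n=1..R. d * cmod (x n))"
      by (rule sum_mono) (use assms that in \<open>auto intro: mult_right_mono\<close>)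
    also have "\<dots> = d * (\<Sum>n=1..R. cmod (x n))" by (simp add: sum_distrib_left)
    also have "\<dots> \<le> d * (sqrt (real R) * vec_norm2 R x)"
      by (rule mult_left_mono[OF sum_abs_le d0])
    finally show ?thesis .
  qed
  have "vec_norm2 R (\<lambda>m. \<Sum>n=1..R. A m n * x n) = L2_set (\<lambda>m. cmod (\<Sum>n=1..R. A m n * x n)) {1..R}"
    by (rule vn_L2)
  also have "\<dots> \<le> L2_set (\<lambda>m. d * (sqrt (real R) * vec_norm2 R x)) {1..R}"
    by (rule L2_set_mono) (use row in auto)
  also have "\<dots> = sqrt (real R) * (d * (sqrt (real R) * vec_norm2 R x))"
    using d0 by (simp add: L2_set_constant vn_nonneg)
  also have "\<dots> = real R * d * vec_norm2 R x" by (simp add: mult_ac)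
  finally show ?thesis .
qed

lemma E_entry:
  assumes "R < N" "pi * real R \<le> real N" "m \<in> {1..R}" "n \<in> {1..R}"
  shows "cmod (T_entry m n - cC N m n) \<le> pi^2 * real R / (real N)^2"
proof (cases "m = n")
  case True
  have "N > 0" using assms by auto
  thus ?thesis using True by (simp add: T_entry_def cC_diag)
next
  case False
  have N: "N > 0" using assms by auto
  define b where "b = pi * (real m - real n) / real N"
  have b0: "b \<noteq> 0" using False N by (simp add: b_def)
  have absd: "\<bar>real m - real n\<bar> \<le> real R" using assms by auto
  have bb: "\<bar>b\<bar> = pi * \<bar>real m - real n\<bar> / real N" by (simp add: b_def abs_mult)
  have b1: "\<bar>b\<bar> \<le> 1"
  proof -
    have "pi * \<bar>real m - real n\<bar> \<le> pi * real R" using absd by (simp add: mult_left_mono)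
    also have "\<dots> \<le> real N" by (rule assms(2))
    finally show ?thesis unfolding bb using N by (simp add: divide_le_eq)
  qed
  have Te: "T_entry m n = of_real (pi / real N * (1 / b))"
    using False N by (simp add: T_entry_def b_def field_simps)
  have Ce: "cC N m n = of_real (pi / real N * (cos b / sin b))"
    unfolding b_def by (rule cC_off) (use assms False in auto)
  have "cmod (T_entry m n - cC N m n) = \<bar>pi / real N * (1/b - cos b / sin b)\<bar>"
    unfolding Te Ce by (simp only: of_real_diff[symmetric] norm_of_real right_diff_distrib)
  also have "\<dots> = pi / real N * \<bar>cos b / sin b - 1/b\<bar>"
    by (simp add: abs_mult abs_minus_commute)
  also have "\<dots> \<le> pi / real N * \<bar>b\<bar>"
    by (rule mult_left_mono[OF cot_bound[OF b0 b1]]) simp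
  also have "\<dots> \<le> pi^2 * real R / (real N)^2"
    unfolding bb using absd N by (simp add: power2_eq_square field_simps mult_left_mono)
  finally show ?thesis .
qed

lemma Capp_rep:
  "(\<Sum>n=1..R. cC N m n * x n) = (1/of_nat N) * (\<Sum>j<N. (mu N j * dft N R x j) * cnj (ee N (j*m)))"
proof -
  have "(\<Sum>n=1..R. cC N m n * x n) = (1/of_nat N) * (\<Sum>n=1..R. \<Sum>j<N. x n * (mu N j * (ee N (j*n) * cnj (ee N (j*m)))))"
    unfolding cC_def by (simp add: sum_distrib_left sum_distrib_right mult_ac)
  also have "(\<Sum>n=1..R. \<Sum>j<N. x n * (mu N j * (ee N (j*n) * cnj (ee N (j*m))))) = (\<Sum>j<N. \<Sum>n=1..R. x n * (mu N j * (ee N (j*n) * cnj (ee N (j*m)))))"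
    by (rule sum.swap)
  also have "\<dots> = (\<Sum>j<N. (mu N j * dft N R x j) * cnj (ee N (j*m)))"
    unfolding dft_def by (simp add: sum_distrib_left sum_distrib_right mult_ac)
  finally show ?thesis .
qed

lemma aux_cnj: "(\<Sum>m\<in>A. Y * (cnj (e m) * cnj (x m))) = Y * cnj (\<Sum>m\<in>A. x m * e m)"
  by (simp add: cnj_sum sum_distrib_left mult_ac)

lemma Cinner:
  "(\<Sum>m=1..R. (\<Sum>n=1..R. cC N m n * x n) * cnj (x m)) = (1/of_nat N) * (\<Sum>j<N. mu N j * of_real ((cmod (dft N R x j))^2))"
proof -
  have eq1: "(\<Sum>n=1..R. cC N m n * x n) * cnj (x m) = (1/of_nat N) * (\<Sum>j<N. (mu N j * dft N R x j) * (cnj (ee N (j*m)) * cnj (x m)))" for m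
    unfolding Capp_rep by (simp only: sum_distrib_right mult.assoc)
  have "(\<Sum>m=1..R. (\<Sum>n=1..R. cC N m n * x n) * cnj (x m)) = (1/of_nat N) * (\<Sum>m=1..R. \<Sum>j<N. (mu N j * dft N R x j) * (cnj (ee N (j*m)) * cnj (x m)))"
    unfolding eq1 by (simp only: sum_distrib_left)
  also have "(\<Sum>m=1..R. \<Sum>j<N. (mu N j * dft N R x j) * (cnj (ee N (j*m)) * cnj (x m))) = (\<Sum>j<N. \<Sum>m=1..R. (mu N j * dft N R x j) * (cnj (ee N (j*m)) * cnj (x m)))"
    by (rule sum.swap)
  also have "\<dots> = (\<Sum>j<N. (mu N j * dft N R x j) * cnj (dft N R x j))"
    unfolding dft_def by (rule sum.cong[OF refl]) (rule aux_cnj)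
  also have "\<dots> = (\<Sum>j<N. mu N j * of_real ((cmod (dft N R x j))^2))"
    by (simp only: sq_cmod mult.assoc)
  finally show ?thesis .
qed


lemma T_split:
  "T_apply R x m = (\<Sum>n=1..R. cC N m n * x n) + (\<Sum>n=1..R. (T_entry m n - cC N m n) * x n)"
  unfolding T_apply_def by (simp add: sum.distrib[symmetric] algebra_simps)

lemma vn_sq: "(vec_norm2 R x)^2 = (\<Sum>n=1..R. (cmod (x n))^2)"
  unfolding vec_norm2_def by (simp add: sum_nonneg)

lemma dft_bound: "(cmod (dft N R x j))^2 \<le> real R * (vec_norm2 R x)^2"
proof -
  have "cmod (dft N R x j) \<le> (\<Sum>n=1..R. cmod (x n))"
    unfolding dft_def by (rule order_trans[OF norm_sum]) (simp add: norm_mult)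
  also have "\<dots> \<le> sqrt (real R) * vec_norm2 R x" by (rule sum_abs_le)
  finally have "(cmod (dft N R x j))^2 \<le> (sqrt (real R) * vec_norm2 R x)^2"
    by (rule power_mono) simp
  thus ?thesis by (simp add: power_mult_distrib)
qed

lemma mu_cmod: "j \<noteq> 0 \<Longrightarrow> N > 0 \<Longrightarrow> cmod (mu N j) = pi * (\<bar>real N - 2*real j\<bar> / real N)"
  unfolding mu_def by (simp only: if_False norm_mult norm_ii norm_of_real) (simp add: abs_mult abs_divide)

lemma mu_cmod_le: "j < N \<Longrightarrow> (cmod (mu N j))^2 \<le> pi^2"
proof -
  assume j: "j < N"
  show ?thesis
  proof (cases "j = 0")
    case True thus ?thesis by (simp add: mu_def)
  next
    case False
    have N: "real N > 0" using j by simp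
    have "\<bar>real N - 2 * real j\<bar> \<le> real N" using j by auto
    hence "\<bar>real N - 2 * real j\<bar> / real N \<le> 1" using N by simp
    hence "(pi * (\<bar>real N - 2 * real j\<bar> / real N))^2 \<le> (pi * 1)^2"
      by (intro power_mono mult_left_mono) auto
    thus ?thesis using False j by (simp add: mu_cmod)
  qed
qed

lemma sq_le_self: "0 \<le> t \<Longrightarrow> t \<le> 1 \<Longrightarrow> t^2 \<le> (t::real)"
  by (simp add: power2_eq_square mult_left_le_one_le)

lemma mu_cmod_mid:
  assumes "K \<le> j" "j + K \<le> N" "0 < K" "2*K \<le> N"
  shows "(cmod (mu N j))^2 \<le> pi^2 * (1 - 2 * real K / real N)"
proof -
  have j0: "j \<noteq> 0" using assms by auto
  have N: "real N > 0" using assms by simp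
  have a: "\<bar>real N - 2 * real j\<bar> \<le> real N - 2 * real K" using assms by auto
  have b: "0 \<le> real N - 2 * real K" using assms by simp
  have "(cmod (mu N j))^2 = pi^2 * (\<bar>real N - 2 * real j\<bar> / real N)^2"
    using j0 assms by (simp add: mu_cmod power_mult_distrib power_divide)
  also have "\<dots> \<le> pi^2 * ((real N - 2 * real K) / real N)^2"
    by (intro mult_left_mono power_mono divide_right_mono a) (use N in auto)
  also have "((real N - 2 * real K) / real N)^2 \<le> (real N - 2 * real K) / real N"
  proof -
    have "(real N - 2 * real K) / real N \<le> 1" using N assms by simp
    moreover have "0 \<le> (real N - 2 * real K) / real N" using b N by simp
    ultimately show ?thesis by (rule sq_le_self[rotated])
  qed
  hence "pi^2 * ((real N - 2 * real K) / real N)^2 \<le> pi^2 * ((real N - 2 * real K) / real N)"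
    by (intro mult_left_mono) auto
  also have "(real N - 2 * real K) / real N = 1 - 2 * real K / real N" using N by (simp add: field_simps)
  finally show ?thesis .
qed

lemma card_B:
  assumes "2*K \<le> N"
  shows "card {j\<in>{..<N}. j < K \<or> N < j + K} \<le> 2*K"
proof -
  have "{j\<in>{..<N}. j < K \<or> N < j + K} \<subseteq> {..<K} \<union> {N-K<..<N}" by auto
  hence "card {j\<in>{..<N}. j < K \<or> N < j + K} \<le> card ({..<K} \<union> {N-K<..<N})"
    by (rule card_mono[rotated]) simp
  also have "\<dots> \<le> card {..<K} + card {N-K<..<N}" by (rule card_Un_le)
  also have "\<dots> \<le> 2*K" using assms by simp
  finally show ?thesis .
qed

lemma C_upper:
  assumes R1: "R \<ge> 1" and NR: "N = 16*R^2"
  shows "(vec_norm2 R (\<lambda>m. \<Sum>n=1..R. cC N m n * x n))^2 \<le> pi^2 * (1 - 1/(4*real R)) * (vec_norm2 R x)^2"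
proof -
  define K where "K = 4*R"
  define nx where "nx = (vec_norm2 R x)^2"
  define X where "X = dft N R x"
  define P where "P = (\<lambda>j. j < K \<or> N < j + K)"
  have rN: "real N = 16 * (real R)^2" using NR by simp
  have rR: "real R \<ge> 1" using R1 by simp
  have RN: "R < N"
  proof -
    have "R * 1 < R * (16*R)" using R1 by (intro mult_strict_left_mono) auto
    thus ?thesis using NR by (simp add: power2_eq_square mult_ac)
  qed
  have N0: "N > 0" using RN by simp
  have KN: "2*K \<le> N" using R1 NR unfolding K_def by (simp add: power2_eq_square)
  have K0: "0 < K" using R1 unfolding K_def by simp
  have nx0: "0 \<le> nx" unfolding nx_def by simp
  have Xb: "(cmod (X j))^2 \<le> real R * nx" for j unfolding X_def nx_def by (rule dft_bound)
  have par: "(\<Sum>j<N. (cmod (X j))^2) = real N * nx" unfolding X_def nx_def vn_sq by (rule parseval[OF RN])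
  have frac: "2 * real K / real N = 1 / (2 * real R)" unfolding K_def rN using rR by (simp add: power2_eq_square field_simps)
  have pt: "(cmod (mu N j * X j))^2 \<le> pi^2 * (1 - 1/(2*real R)) * (cmod (X j))^2 + (if P j then pi^2 / 2 * nx else 0)"
    if j: "j < N" for j
  proof (cases "P j")
    case True
    have "(cmod (mu N j * X j))^2 = (cmod (mu N j))^2 * (cmod (X j))^2" by (simp add: norm_mult power_mult_distrib)
    also have "\<dots> \<le> pi^2 * (cmod (X j))^2" by (rule mult_right_mono[OF mu_cmod_le[OF j]]) simp
    also have "\<dots> = pi^2 * (1 - 1/(2*real R)) * (cmod (X j))^2 + pi^2/(2*real R) * (cmod (X j))^2"
      by (simp add: algebra_simps)
    also have "pi^2/(2*real R) * (cmod (X j))^2 \<le> pi^2/(2*real R) * (real R * nx)"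
      by (rule mult_left_mono[OF Xb]) simp
    also have "pi^2/(2*real R) * (real R * nx) = pi^2 / 2 * nx" using rR by (simp add: field_simps)
    finally show ?thesis using True by simp
  next
    case False
    hence jj: "K \<le> j" "j + K \<le> N" unfolding P_def by auto
    have "(cmod (mu N j * X j))^2 = (cmod (mu N j))^2 * (cmod (X j))^2" by (simp add: norm_mult power_mult_distrib)
    also have "\<dots> \<le> pi^2 * (1 - 2 * real K / real N) * (cmod (X j))^2"
      by (rule mult_right_mono[OF mu_cmod_mid[OF jj K0 KN]]) simp
    finally show ?thesis using False unfolding frac by simp
  qed
  have "(vec_norm2 R (\<lambda>m. \<Sum>n=1..R. cC N m n * x n))^2 = (\<Sum>m=1..R. (cmod (\<Sum>n=1..R. cC N m n * x n))^2)"
    by (rule vn_sq)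
  also have "\<dots> = (\<Sum>m=1..R. (cmod ((1/of_nat N) * (\<Sum>j<N. (mu N j * X j) * cnj (ee N (j*m)))))^2)"
    unfolding Capp_rep X_def ..
  also have "\<dots> \<le> (1/real N) * (\<Sum>j<N. (cmod (mu N j * X j))^2)"
    by (rule bessel[OF RN])
  also have "(\<Sum>j<N. (cmod (mu N j * X j))^2) \<le> (\<Sum>j<N. pi^2 * (1 - 1/(2*real R)) * (cmod (X j))^2 + (if P j then pi^2 / 2 * nx else 0))"
    by (rule sum_mono) (use pt in auto)
  also have "\<dots> = pi^2 * (1 - 1/(2*real R)) * (real N * nx) + (\<Sum>j<N. if P j then pi^2 / 2 * nx else 0)"
    by (simp add: sum.distrib sum_distrib_left[symmetric] par)
  also have "(\<Sum>j<N. if P j then pi^2 / 2 * nx else 0) = real (card {j\<in>{..<N}. P j}) * (pi^2 / 2 * nx)"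
    by (simp add: sum.inter_filter[symmetric])
  also have "real (card {j\<in>{..<N}. P j}) * (pi^2 / 2 * nx) \<le> real (2*K) * (pi^2 / 2 * nx)"
    by (rule mult_right_mono) (use card_B[OF KN] nx0 in \<open>auto simp: P_def\<close>)
  finally have "(vec_norm2 R (\<lambda>m. \<Sum>n=1..R. cC N m n * x n))^2 \<le> (1/real N) * (pi^2 * (1 - 1/(2*real R)) * (real N * nx) + real (2*K) * (pi^2 / 2 * nx))"
    using N0 by (simp add: divide_right_mono)
  also have "\<dots> = pi^2 * (1 - 1/(4*real R)) * nx"
    unfolding K_def using rR N0 rN by (simp add: field_simps power2_eq_square)
  finally show ?thesis unfolding nx_def .
qed

lemma E_upper:
  assumes R1: "R \<ge> 1" and NR: "N = 16*R^2"
  shows "vec_norm2 R (\<lambda>m. \<Sum>n=1..R. (T_entry m n - cC N m n) * x n) \<le> pi / (16 * real R) * vec_norm2 R x"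
proof -
  have rN: "real N = 16 * (real R)^2" using NR by simp
  have rR: "real R \<ge> 1" using R1 by simp
  have RN: "R < N"
  proof -
    have "R * 1 < R * (16*R)" using R1 by (intro mult_strict_left_mono) auto
    thus ?thesis using NR by (simp add: power2_eq_square mult_ac)
  qed
  have piN: "pi * real R \<le> real N"
  proof -
    have "pi * real R \<le> 16 * real R" using pi_less_4 rR by (intro mult_right_mono) auto
    also have "\<dots> \<le> 16 * real R * real R" using rR by simp
    finally show ?thesis unfolding rN by (simp add: power2_eq_square mult_ac)
  qed
  have "vec_norm2 R (\<lambda>m. \<Sum>n=1..R. (T_entry m n - cC N m n) * x n) \<le> real R * (pi^2 * real R / (real N)^2) * vec_norm2 R x"
    by (rule matrix_bound) (rule E_entry[OF RN piN])
  also have "real R * (pi^2 * real R / (real N)^2) \<le> pi / (16 * real R)"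
  proof -
    have "real R * (pi^2 * real R / (real N)^2) = pi / (16 * real R) * (pi / (16 * real R))"
      unfolding rN using rR by (simp add: field_simps power2_eq_square)
    also have "\<dots> \<le> pi / (16 * real R) * 1"
      using rR pi_less_4 by (intro mult_left_mono) auto
    finally show ?thesis by simp
  qed
  hence "real R * (pi^2 * real R / (real N)^2) * vec_norm2 R x \<le> pi / (16 * real R) * vec_norm2 R x"
    by (rule mult_right_mono) (rule vn_nonneg)
  finally show ?thesis .
qed

lemma T_upper:
  assumes R1: "R \<ge> 1"
  shows "vec_norm2 R (T_apply R x) \<le> (pi - pi/(16*real R)) * vec_norm2 R x"
proof -
  define N where "N = 16*R^2"
  have rR: "real R \<ge> 1" using R1 by simp
  have "vec_norm2 R (T_apply R x) = vec_norm2 R (\<lambda>m. (\<Sum>n=1..R. cC N m n * x n) + (\<Sum>n=1..R. (T_entry m n - cC N m n) * x n))"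
    by (rule arg_cong[where f="vec_norm2 R"], rule ext, rule T_split)
  also have "\<dots> \<le> vec_norm2 R (\<lambda>m. \<Sum>n=1..R. cC N m n * x n) + vec_norm2 R (\<lambda>m. \<Sum>n=1..R. (T_entry m n - cC N m n) * x n)"
    by (rule vn_add)
  also have "vec_norm2 R (\<lambda>m. \<Sum>n=1..R. cC N m n * x n) \<le> pi * (1 - 1/(8*real R)) * vec_norm2 R x"
  proof (rule power2_le_imp_le)
    show "0 \<le> pi * (1 - 1/(8*real R)) * vec_norm2 R x" using rR by (simp add: vn_nonneg)
    have "(vec_norm2 R (\<lambda>m. \<Sum>n=1..R. cC N m n * x n))^2 \<le> pi^2 * (1 - 1/(4*real R)) * (vec_norm2 R x)^2"
      by (rule C_upper[OF R1 N_def])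
    also have "\<dots> \<le> pi^2 * (1 - 1/(8*real R))^2 * (vec_norm2 R x)^2"
    proof -
      have e1: "(1 - 1/(8*real R))^2 = 1 - 2 * (1/(8*real R)) + (1/(8*real R))^2"
        by (simp add: power2_eq_square algebra_simps)
      have e2: "1/(4*real R) = 2 * (1/(8*real R))" by simp
      have "1 - 1/(4*real R) \<le> (1 - 1/(8*real R))^2"
        unfolding e1 e2 by simp
      thus ?thesis by (intro mult_right_mono mult_left_mono) auto
    qed
    also have "\<dots> = (pi * (1 - 1/(8*real R)) * vec_norm2 R x)^2" by (simp add: power_mult_distrib)
    finally show "(vec_norm2 R (\<lambda>m. \<Sum>n=1..R. cC N m n * x n))^2 \<le> (pi * (1 - 1/(8*real R)) * vec_norm2 R x)^2" .
  qed
  also have "vec_norm2 R (\<lambda>m. \<Sum>n=1..R. (T_entry m n - cC N m n) * x n) \<le> pi / (16 * real R) * vec_norm2 R x"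
    by (rule E_upper[OF R1 N_def])
  also have "pi * (1 - 1/(8*real R)) * vec_norm2 R x + pi / (16 * real R) * vec_norm2 R x = (pi - pi/(16*real R)) * vec_norm2 R x"
    using rR by (simp add: field_simps)
  finally show ?thesis by simp
qed


lemma T_lower_inner:
  assumes R1: "R \<ge> 1" and NR: "N = 16*R^2"
  shows "(1/real N) * (\<Sum>j<N. Im (mu N j) * (cmod (dft N R x j))^2) - pi/(16*real R) * (vec_norm2 R x)^2
         \<le> vec_norm2 R (T_apply R x) * vec_norm2 R x"
proof -
  define S1 where "S1 = (\<Sum>m=1..R. (\<Sum>n=1..R. cC N m n * x n) * cnj (x m))"
  define S2 where "S2 = (\<Sum>m=1..R. (\<Sum>n=1..R. (T_entry m n - cC N m n) * x n) * cnj (x m))"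
  have split: "(\<Sum>m=1..R. T_apply R x m * cnj (x m)) = S1 + S2"
  proof -
    have "(\<Sum>m=1..R. T_apply R x m * cnj (x m)) = (\<Sum>m=1..R. (\<Sum>n=1..R. cC N m n * x n) * cnj (x m) + (\<Sum>n=1..R. (T_entry m n - cC N m n) * x n) * cnj (x m))"
      by (rule sum.cong[OF refl]) (simp only: T_split[of R x _ N] distrib_right)
    also have "\<dots> = S1 + S2" unfolding S1_def S2_def by (rule sum.distrib)
    finally show ?thesis .
  qed
  have "S1 = (1/of_nat N) * (\<Sum>j<N. mu N j * of_real ((cmod (dft N R x j))^2))"
    unfolding S1_def by (rule Cinner)
  hence imS1: "Im S1 = (1/real N) * (\<Sum>j<N. Im (mu N j) * (cmod (dft N R x j))^2)"
  proof -
    have N0: "real N > 0" using NR R1 by simp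
    assume "S1 = (1/of_nat N) * (\<Sum>j<N. mu N j * of_real ((cmod (dft N R x j))^2))"
    thus ?thesis using N0 by (simp add: Im_sum Im_divide power2_eq_square)
  qed
  have "cmod S2 \<le> vec_norm2 R (\<lambda>m. \<Sum>n=1..R. (T_entry m n - cC N m n) * x n) * vec_norm2 R x"
    unfolding S2_def by (rule inner_le)
  also have "\<dots> \<le> pi / (16 * real R) * vec_norm2 R x * vec_norm2 R x"
    by (rule mult_right_mono[OF E_upper[OF R1 NR] vn_nonneg])
  finally have S2b: "- Im S2 \<le> pi / (16 * real R) * (vec_norm2 R x)^2"
    using abs_Im_le_cmod[of S2] by (simp add: power2_eq_square)
  have "Im (S1 + S2) \<le> cmod (S1 + S2)" using abs_Im_le_cmod[of "S1+S2"] by simp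
  also have "\<dots> \<le> vec_norm2 R (T_apply R x) * vec_norm2 R x"
    unfolding split[symmetric] by (rule inner_le)
  finally show ?thesis using imS1 S2b by simp
qed

lemma T_apply_scale: "T_apply R (\<lambda>n. c * x n) = (\<lambda>m. c * T_apply R x m)"
  unfolding T_apply_def by (simp add: sum_distrib_left mult_ac)


lemma cis_minus_1: "cmod (cis (2*a) - 1) = 2 * \<bar>sin a\<bar>"
proof -
  have "cis (2*a) - 1 = cis a * (2 * \<i> * of_real (sin a))"
  proof -
    have cz: "cis (2*a) = Complex (1 - 2 * (sin a)^2) (2 * sin a * cos a)"
      by (simp add: complex_eq_iff cos_double_sin sin_double)
    show ?thesis unfolding cz by (simp add: complex_eq_iff power2_eq_square algebra_simps)
  qed
  hence "cmod (cis (2*a) - 1) = cmod (cis a) * cmod (2 * \<i> * of_real (sin a))" by (simp add: norm_mult)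
  thus ?thesis by (simp add: norm_mult)
qed

lemma geom_bound:
  fixes w :: complex
  assumes "w \<noteq> 1" "cmod w = 1"
  shows "cmod (\<Sum>l<M. w^l) \<le> 2 / cmod (w - 1)"
proof -
  have "(\<Sum>l<M. w^l) = (w^M - 1) / (w - 1)" using assms by (simp add: geometric_sum)
  hence "cmod (\<Sum>l<M. w^l) = cmod (w^M - 1) / cmod (w - 1)" by (simp add: norm_divide)
  also have "cmod (w^M - 1) \<le> 2"
  proof -
    have "cmod (w^M - 1) \<le> cmod (w^M) + cmod (1::complex)" by (rule norm_triangle_ineq4)
    thus ?thesis using assms by (simp add: norm_power)
  qed
  hence "cmod (w^M - 1) / cmod (w - 1) \<le> 2 / cmod (w - 1)"
    by (rule divide_right_mono) simp
  finally show ?thesis .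
qed

lemma sin_ge_56: fixes a :: real assumes "0 \<le> a" "a \<le> 1" shows "5/6 * a \<le> sin a"
proof -
  have bb: "a*a \<le> 1" using assms by (simp add: mult_le_one)
  have "a^3 \<le> a" using mult_left_mono[OF bb, of a] assms by (simp add: power3_eq_cube)
  thus ?thesis using sin_lower[OF assms(1)] by simp
qed

lemma bad_sin:
  assumes s1: "1 \<le> s" and sN: "pi * real s / real N \<le> 1" and j: "j < N" and bad: "j = 0 \<or> 2 * s < j"
  shows "5/6 * (pi * real s / real N) \<le> \<bar>sin (pi * (real j - real s) / real N)\<bar>"
proof -
  have N0: "real N > 0" using j by simp
  define a where "a = pi * real s / real N"
  have a0: "0 < a" unfolding a_def using s1 N0 by simp
  have a1: "a \<le> 1" using sN unfolding a_def .
  have a2: "a \<le> pi/2" using a1 pi_gt3 by simp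
  have sa: "5/6 * a \<le> sin a" using sin_ge_56 a0 a1 by simp
  show ?thesis
  proof (cases "j = 0")
    case True
    have "pi * (real j - real s) / real N = - a" using True unfolding a_def by simp
    thus ?thesis using sa a0 sin_ge_zero[of a] a2 by (simp add: a_def)
  next
    case False
    hence js: "2 * s < j" using bad by simp
    define y where "y = pi * (real j - real s) / real N"
    have ya: "a \<le> y" unfolding y_def a_def using js N0 by (simp add: divide_right_mono)
    have ya2: "a \<le> pi - y"
    proof -
      have "real s \<le> real N - (real j - real s)" using j by simp
      hence "pi * real s / real N \<le> pi * (real N - (real j - real s)) / real N"
        using N0 by (intro divide_right_mono mult_left_mono) auto
      also have "\<dots> = pi - y" unfolding y_def using N0 by (simp add: field_simps)
      finally show ?thesis unfolding a_def .
    qed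
    have "sin a \<le> sin y"
    proof (cases "y \<le> pi/2")
      case True thus ?thesis using ya a0 by (intro sin_monotone_2pi_le) auto
    next
      case False
      have "sin a \<le> sin (pi - y)" using ya2 a0 False by (intro sin_monotone_2pi_le) auto
      thus ?thesis by simp
    qed
    moreover have "0 \<le> sin y" using ya ya2 a0 by (intro sin_ge_zero) auto
    ultimately show ?thesis using sa unfolding y_def a_def by simp
  qed
qed

lemma Im_mu: "Im (mu N j) = (if j = 0 then 0 else pi * (real N - 2 * real j) / real N)"
  by (simp add: mu_def)

lemma poly_sum_upto:
  fixes p :: "complex poly"
  assumes "degree p \<le> n"
  shows "poly p z = (\<Sum>i\<le>n. coeff p i * z^i)"
proof -
  have "poly p z = (\<Sum>i\<le>degree p. coeff p i * z^i)" by (rule poly_altdef)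
  also have "\<dots> = (\<Sum>i\<le>n. coeff p i * z^i)"
    by (rule sum.mono_neutral_left) (use assms in \<open>auto simp: coeff_eq_0\<close>)
  finally show ?thesis .
qed

lemma test_vector:
  assumes R1: "R \<ge> 1" and NR: "N = 16*R^2" and M1: "M \<ge> 1" and deg: "1 + (M-1)*k \<le> R"
    and s1: "1 \<le> s" and sM: "N \<le> s * M" and sN: "pi * real s / real N \<le> 1"
  shows "\<exists>y. vec_norm2 R y = 1 \<and>
    pi - 4*pi*real s/real N - 2*pi*real N/4^k - pi/(16*real R) \<le> vec_norm2 R (T_apply R y)"
proof -
  define \<zeta> where "\<zeta> = cnj (ee N s)"
  define Q :: "complex poly" where "Q = (\<Sum>l<M. monom (\<zeta>^l) l)"
  define P where "P = [:0,1:] * Q^k"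
  define x where "x = (\<lambda>n. coeff P n)"
  define X where "X = dft N R x"
  define W where "W = (\<lambda>j. \<zeta> * ee N j)"
  define nx where "nx = vec_norm2 R x"
  define c where "c = pi - 4*pi*real s/real N - 2*pi*real N/4^k - pi/(16*real R)"
  have rR: "real R \<ge> 1" using R1 by simp
  have rN: "real N = 16 * (real R)^2" using NR by simp
  have RN: "R < N"
  proof -
    have "R * 1 < R * (16*R)" using R1 by (intro mult_strict_left_mono) auto
    thus ?thesis using NR by (simp add: power2_eq_square mult_ac)
  qed
  have N0: "N > 0" using RN by simp
  have sN': "s < N"
  proof -
    have "pi * real s \<le> real N" using sN N0 by (simp add: divide_le_eq)
    moreover have "real s < pi * real s" using s1 pi_gt3 by simp
    ultimately show ?thesis by simp
  qed
  have degQ: "degree Q \<le> M - 1"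
    unfolding Q_def by (rule degree_sum_le) (auto intro: order_trans[OF degree_monom_le])
  have degP: "degree P \<le> R"
  proof -
    have "degree P \<le> degree ([:0,1:] :: complex poly) + degree (Q^k)" unfolding P_def by (rule degree_mult_le)
    also have "degree (Q^k) \<le> degree Q * k" by (rule degree_power_le)
    also have "degree Q * k \<le> (M-1)*k" using degQ by simp
    finally show ?thesis using deg by simp
  qed
  have c0: "coeff P 0 = 0" unfolding P_def by (simp add: coeff_mult_0)
  have Xpoly: "X j = poly P (ee N j)" for j
  proof -
    have "poly P (ee N j) = (\<Sum>i\<le>R. coeff P i * ee N j ^ i)" by (rule poly_sum_upto[OF degP])
    also have "{..R} = insert 0 {1..R}" by auto
    also have "(\<Sum>i\<in>insert 0 {1..R}. coeff P i * ee N j ^ i) = (\<Sum>i=1..R. coeff P i * ee N j ^ i)"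
      by (simp add: c0)
    also have "\<dots> = X j" unfolding X_def dft_def x_def by (simp add: ee_pow)
    finally show ?thesis by simp
  qed
  have Ppoly: "poly P z = z * (\<Sum>l<M. (\<zeta>*z)^l)^k" for z
    by (simp add: P_def Q_def poly_sum poly_monom power_mult_distrib)
  have Xabs: "cmod (X j) = (cmod (\<Sum>l<M. W j ^ l))^k" for j
    unfolding Xpoly Ppoly W_def by (simp add: norm_mult norm_power)
  have Ws: "W s = 1" unfolding W_def \<zeta>_def
    using complex_norm_square[of "ee N s"] by (simp add: mult.commute)
  have Xs: "(cmod (X s))^2 = real M ^ (2*k)"
    unfolding Xabs Ws by (simp add: power_mult[symmetric] mult.commute)
  have Wj: "W j = cis (2 * (pi * (real j - real s) / real N))" for j
    unfolding W_def \<zeta>_def ee_def cis_cnj cis_mult by (rule arg_cong[where f=cis]) (use N0 in \<open>simp add: field_simps\<close>)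
  have bad: "(cmod (X j))^2 \<le> (real M / 2)^(2*k)" if j: "j < N" and b: "j = 0 \<or> 2 * s < j" for j
  proof -
    have sb: "5/6 * (pi * real s / real N) \<le> \<bar>sin (pi * (real j - real s) / real N)\<bar>"
      by (rule bad_sin[OF s1 sN j b])
    have pos: "0 < pi * real s / real N" using s1 N0 by simp
    have Wm: "cmod (W j - 1) = 2 * \<bar>sin (pi * (real j - real s) / real N)\<bar>"
      unfolding Wj by (rule cis_minus_1)
    have Wpos: "5/3 * (pi * real s / real N) \<le> cmod (W j - 1)" using sb Wm by simp
    hence W1: "W j \<noteq> 1" using pos by auto
    have Wn: "cmod (W j) = 1" unfolding Wj by simp
    have "cmod (\<Sum>l<M. W j ^ l) \<le> 2 / cmod (W j - 1)" by (rule geom_bound[OF W1 Wn])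
    also have "\<dots> \<le> 2 / (5/3 * (pi * real s / real N))"
    proof (rule divide_left_mono[OF Wpos])
      have qpos: "0 < 5/3 * (pi * real s / real N)" using pos by simp
      hence "0 < cmod (W j - 1)" using Wpos by linarith
      thus "0 < cmod (W j - 1) * (5/3 * (pi * real s / real N))" using qpos by (rule mult_pos_pos)
    qed simp
    also have "\<dots> \<le> real M / 2"
    proof -
      have "12 * real N \<le> 12 * (real s * real M)" using sM by (simp add: of_nat_mult[symmetric] del: of_nat_mult)
      also have "\<dots> \<le> 5 * pi * (real s * real M)" using pi_gt3 s1 M1 by (intro mult_right_mono) auto
      finally have "12 * real N \<le> 5 * pi * real s * real M" by (simp add: mult_ac)
      thus ?thesis using pos s1 N0 by (simp add: field_simps)
    qed
    finally have "cmod (X j) \<le> (real M / 2)^k" unfolding Xabs by (rule power_mono) simp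
    hence "(cmod (X j))^2 \<le> ((real M / 2)^k)^2" by (rule power_mono) simp
    thus ?thesis by (simp add: power_mult[symmetric] mult.commute)
  qed
  define A where "A = (\<Sum>j<N. (cmod (X j))^2)"
  have par: "A = real N * nx^2" unfolding A_def X_def nx_def vn_sq by (rule parseval[OF RN])
  have As: "real M ^ (2*k) \<le> A"
  proof -
    have "(cmod (X s))^2 \<le> A" unfolding A_def
      by (rule member_le_sum) (use sN' in auto)
    thus ?thesis using Xs by simp
  qed
  have Mpow: "(real M / 2)^(2*k) = real M ^ (2*k) / 4^k"
    by (simp add: power_divide power_mult)
  define t where "t = pi - 4*pi*real s/real N"
  have pt: "Im (mu N j) * (cmod (X j))^2 \<ge> t * (cmod (X j))^2 - (if j = 0 \<or> 2 * s < j then 2*pi*(real M / 2)^(2*k) else 0)"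
    if j: "j < N" for j
  proof (cases "j = 0 \<or> 2 * s < j")
    case True
    have Xb: "(cmod (X j))^2 \<le> (real M / 2)^(2*k)" by (rule bad[OF j True])
    have im: "- pi \<le> Im (mu N j)"
    proof (cases "j = 0")
      case True thus ?thesis by (simp add: Im_mu)
    next
      case False
      have "- pi * real N \<le> pi * (real N - 2 * real j)" using j by (simp add: algebra_simps)
      hence "- pi \<le> pi * (real N - 2 * real j) / real N" using N0 by (simp add: le_divide_eq)
      thus ?thesis using False by (simp add: Im_mu)
    qed
    have "t * (cmod (X j))^2 - 2*pi*(real M / 2)^(2*k) \<le> pi * (cmod (X j))^2 - 2*pi*(cmod (X j))^2"
    proof -
      have "t \<le> pi" unfolding t_def using s1 N0 by simp
      hence "t * (cmod (X j))^2 \<le> pi * (cmod (X j))^2" by (rule mult_right_mono) simp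
      moreover have "2*pi*(cmod (X j))^2 \<le> 2*pi*(real M / 2)^(2*k)" using Xb by (intro mult_left_mono) auto
      ultimately show ?thesis by linarith
    qed
    also have "\<dots> = - pi * (cmod (X j))^2" by simp
    also have "\<dots> \<le> Im (mu N j) * (cmod (X j))^2" by (rule mult_right_mono[OF im]) simp
    finally show ?thesis using True by simp
  next
    case False
    hence jj: "1 \<le> j" "j \<le> 2 * s" by auto
    have "t \<le> pi * (real N - 2 * real j) / real N"
    proof -
      have "pi * (real N - 2 * real j) / real N = pi - 2 * pi * real j / real N"
        using N0 by (simp add: field_simps)
      moreover have "2 * pi * real j / real N \<le> 4 * pi * real s / real N"
        using jj N0 by (intro divide_right_mono) auto
      ultimately show ?thesis unfolding t_def by simp
    qed
    hence "t * (cmod (X j))^2 \<le> Im (mu N j) * (cmod (X j))^2"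
      using jj by (intro mult_right_mono) (auto simp: Im_mu)
    thus ?thesis using False by simp
  qed
  have "(\<Sum>j<N. Im (mu N j) * (cmod (X j))^2) \<ge> (\<Sum>j<N. t * (cmod (X j))^2 - (if j = 0 \<or> 2 * s < j then 2*pi*(real M / 2)^(2*k) else 0))"
    by (rule sum_mono) (use pt in auto)
  moreover have "(\<Sum>j<N. (if j = 0 \<or> 2 * s < j then 2*pi*(real M / 2)^(2*k) else 0)) \<le> (\<Sum>j<N. 2*pi*(real M / 2)^(2*k))"
    by (rule sum_mono) auto
  ultimately have "(\<Sum>j<N. Im (mu N j) * (cmod (X j))^2) \<ge> t * A - real N * (2*pi*(real M / 2)^(2*k))"
    unfolding A_def by (simp add: sum_subtractf sum_distrib_left)
  moreover have "real N * (2*pi*(real M / 2)^(2*k)) \<le> 2*pi*real N/4^k * A"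
    unfolding Mpow using As by (simp add: field_simps) (metis mult.commute mult_left_mono of_nat_0_le_iff)
  ultimately have main: "(\<Sum>j<N. Im (mu N j) * (cmod (X j))^2) \<ge> (t - 2*pi*real N/4^k) * A"
    by (simp add: algebra_simps)
  have nxpos: "nx > 0"
  proof -
    have "0 < real M ^ (2*k)" using M1 by simp
    hence "0 < A" using As by linarith
    hence "0 < nx^2" using par N0 by (simp add: zero_less_mult_iff)
    thus ?thesis unfolding nx_def using vn_nonneg[of R x] by (simp add: zero_less_power2)
  qed
  have "(t - 2*pi*real N/4^k) * nx^2 - pi/(16*real R) * nx^2 \<le> (1/real N) * (\<Sum>j<N. Im (mu N j) * (cmod (X j))^2) - pi/(16*real R) * nx^2"
  proof -
    have "(t - 2*pi*real N/4^k) * nx^2 = (1/real N) * ((t - 2*pi*real N/4^k) * A)" using par N0 by simp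
    also have "\<dots> \<le> (1/real N) * (\<Sum>j<N. Im (mu N j) * (cmod (X j))^2)"
      using main by (intro mult_left_mono) auto
    finally show ?thesis by simp
  qed
  also have "\<dots> \<le> vec_norm2 R (T_apply R x) * nx"
    unfolding X_def nx_def by (rule T_lower_inner[OF R1 NR])
  finally have "c * nx * nx \<le> vec_norm2 R (T_apply R x) * nx"
    unfolding c_def t_def by (simp add: power2_eq_square algebra_simps)
  hence cT: "c * nx \<le> vec_norm2 R (T_apply R x)" using nxpos by simp
  define y where "y = (\<lambda>n. complex_of_real (1/nx) * x n)"
  have cn: "cmod (complex_of_real (1/nx)) = 1/nx" using nxpos by (simp only: norm_of_real) simp
  have "vec_norm2 R y = 1" unfolding y_def vn_scale cn using nxpos by (simp add: nx_def)
  moreover have "vec_norm2 R (T_apply R y) = vec_norm2 R (T_apply R x) / nx"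
    unfolding y_def T_apply_scale vn_scale cn using nxpos by simp
  moreover have "c \<le> vec_norm2 R (T_apply R x) / nx" using cT nxpos by (simp add: le_divide_eq)
  ultimately show ?thesis unfolding c_def by auto
qed


lemma opnorm_facts:
  assumes R1: "R \<ge> 1"
  shows "T_opnorm R \<le> pi - pi/(16*real R)"
    and "\<And>y. vec_norm2 R y = 1 \<Longrightarrow> vec_norm2 R (T_apply R y) \<le> T_opnorm R"
    and "0 \<le> T_opnorm R"
proof -
  define S where "S = {vec_norm2 R (T_apply R x) | x. vec_norm2 R x = 1}"
  have To: "T_opnorm R = Sup S" unfolding S_def T_opnorm_def ..
  define e where "e = (\<lambda>n::nat. if n = 1 then (1::complex) else 0)"
  have e1: "vec_norm2 R e = 1"
  proof -
    have "(\<Sum>n=1..R. (cmod (e n))^2) = (\<Sum>n\<in>{1..R}. if n = 1 then 1 else 0)"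
      by (rule sum.cong) (auto simp: e_def)
    also have "\<dots> = 1" using R1 by simp
    finally show ?thesis unfolding vec_norm2_def by simp
  qed
  have ne: "S \<noteq> {}" unfolding S_def using e1 by blast
  have ub: "\<And>z. z \<in> S \<Longrightarrow> z \<le> pi - pi/(16*real R)"
  proof -
    fix z assume "z \<in> S"
    then obtain x where zx: "z = vec_norm2 R (T_apply R x)" and x1: "vec_norm2 R x = 1" unfolding S_def by blast
    show "z \<le> pi - pi/(16*real R)" using T_upper[OF R1, of x] unfolding zx x1 by simp
  qed
  hence bdd: "bdd_above S" by (rule bdd_aboveI)
  show "T_opnorm R \<le> pi - pi/(16*real R)" unfolding To by (rule cSup_least[OF ne ub])
  show "vec_norm2 R (T_apply R y) \<le> T_opnorm R" if "vec_norm2 R y = 1" for y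
    unfolding To by (rule cSup_upper[OF _ bdd]) (use that in \<open>auto simp: S_def\<close>)
  have "vec_norm2 R (T_apply R e) \<le> T_opnorm R"
    unfolding To by (rule cSup_upper[OF _ bdd]) (use e1 in \<open>auto simp: S_def\<close>)
  thus "0 \<le> T_opnorm R" using vn_nonneg[of R "T_apply R e"] by linarith
qed

lemma pow2_bracket: fixes R :: nat shows "R \<ge> 1 \<Longrightarrow> \<exists>k. R \<le> 2^k \<and> 2^k < 2*R"
proof -
  assume R1: "R \<ge> 1"
  have ex: "\<exists>k. R \<le> 2^k" using less_exp[of R] by (metis less_imp_le)
  define k where "k = (LEAST k. R \<le> 2^k)"
  have k1: "R \<le> 2^k" unfolding k_def using ex by (rule LeastI_ex)
  have k2: "2^k < 2*R"
  proof (cases k)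
    case 0 thus ?thesis using R1 by simp
  next
    case (Suc k')
    have "\<not> R \<le> 2^k'" using not_less_Least[of k' "\<lambda>k. R \<le> 2^k"] Suc unfolding k_def by simp
    thus ?thesis using Suc by simp
  qed
  show ?thesis using k1 k2 by blast
qed

lemma twelve_le_pow: "7 \<le> k \<Longrightarrow> 12 * k \<le> (2::nat)^k"
proof (induction k rule: dec_induct)
  case base thus ?case by simp
next
  case (step n) thus ?case by simp
qed

lemma ln2_half: "1/2 < ln (2::real)"
proof -
  have "exp (1/2::real) * exp (1/2) = exp 1" by (simp flip: exp_add)
  also have "\<dots> \<le> 3" by (rule exp_le)
  finally have h: "exp (1/2::real) * exp (1/2) \<le> 3" .
  have "exp (1/2::real) < 2"
  proof (rule ccontr)
    assume "\<not> exp (1/2::real) < 2"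
    hence "2 \<le> exp (1/2::real)" by simp
    hence "2 * 2 \<le> exp (1/2::real) * exp (1/2)" by (intro mult_mono) auto
    thus False using h by simp
  qed
  hence "exp (1/2::real) < exp (ln 2)" by simp
  thus ?thesis by (simp only: exp_less_cancel_iff)
qed

lemma sixteen_le_pow: "7 \<le> k \<Longrightarrow> 16 * k \<le> (2::nat)^k"
proof (induction k rule: dec_induct)
  case base thus ?case by simp
next
  case (step n)
  have "16 \<le> (2::nat)^n"
  proof -
    have "(2::nat)^4 \<le> 2^n" using step(1) by (intro power_increasing) auto
    thus ?thesis by simp
  qed
  thus ?case using step by simp
qed

lemma large_R:
  assumes R64: "R \<ge> 64"
  shows "pi - T_opnorm R < 1000 * ln (real R) / real R"
proof -
  have R1: "R \<ge> 1" using R64 by simp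
  obtain k0 where k0a: "R \<le> 2^k0" and k0b: "2^k0 < 2*R" using pow2_bracket[OF R1] by blast
  define k where "k = 2*k0"
  define M where "M = (R-1) div k + 1"
  define N where "N = 16*R^2"
  define s where "s = N div M + 1"
  have rR: "real R \<ge> 64" using R64 by simp
  have rN: "real N = 16 * (real R)^2" unfolding N_def by simp
  have k8: "8*k0 + 1 \<le> R"
  proof (rule ccontr)
    assume "\<not> 8*k0 + 1 \<le> R"
    hence Rl: "R \<le> 8*k0" by simp
    hence "2^k0 < 16*k0" using k0b by simp
    hence "k0 < 7" using sixteen_le_pow[of k0] by (cases "7 \<le> k0") auto
    thus False using Rl R64 by simp
  qed
  have kpos: "k > 0" unfolding k_def using k0a R64 by (cases k0) auto
  have M5: "M \<ge> 5"
  proof -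
    have "4 * k \<le> R - 1" using k8 unfolding k_def by simp
    hence "(4*k) div k \<le> (R-1) div k" by (rule div_le_mono)
    thus ?thesis unfolding M_def using kpos by simp
  qed
  have deg: "1 + (M-1)*k \<le> R"
  proof -
    have h: "(R-1) div k * k \<le> R - 1" by (rule div_times_less_eq_dividend)
    have "1 + (R-1) div k * k \<le> R" using h R1 by linarith
    moreover have "M - 1 = (R-1) div k" unfolding M_def by simp
    ultimately show ?thesis by simp
  qed
  have Mk: "R \<le> M * k"
  proof -
    have h1: "(R-1) div k * k + (R-1) mod k = R - 1" by (rule div_mult_mod_eq)
    have h2: "(R-1) mod k < k" using kpos by simp
    have h3: "M * k = (R-1) div k * k + k" unfolding M_def by (simp add: algebra_simps)
    show ?thesis using h1 h2 h3 R1 by linarith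
  qed
  have sM: "N \<le> s * M"
  proof -
    have h1: "N div M * M + N mod M = N" by (rule div_mult_mod_eq)
    have h2: "N mod M < M" using M5 by simp
    have h3: "s * M = N div M * M + M" unfolding s_def by (simp add: algebra_simps)
    show ?thesis using h1 h2 h3 by linarith
  qed
  have s1: "1 \<le> s" unfolding s_def by simp
  have rM: "real M \<ge> 5" using M5 by simp
  have N0: "real N > 0" unfolding rN using rR by simp
  have Nbig: "real N \<ge> 64"
  proof -
    have "64 * 1 \<le> real R * real R" using rR by (intro mult_mono) auto
    thus ?thesis unfolding rN by (simp add: power2_eq_square)
  qed
  have sreal: "real s \<le> real N / real M + 1"
  proof -
    have "real (N div M) * real M \<le> real N"
      using div_times_less_eq_dividend[of N M] by (simp add: of_nat_mult[symmetric] del: of_nat_mult)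
    hence "real (N div M) \<le> real N / real M" using rM by (simp add: le_divide_eq)
    thus ?thesis unfolding s_def by simp
  qed
  have s_over_N: "real s / real N \<le> 1 / real M + 1 / real N"
  proof -
    have "real s / real N \<le> (real N / real M + 1) / real N" using sreal N0 by (simp add: divide_right_mono)
    also have "\<dots> = 1 / real M + 1 / real N" using N0 rM by (simp add: field_simps)
    finally show ?thesis .
  qed
  have sN: "pi * real s / real N \<le> 1"
  proof -
    have "pi * real s / real N = pi * (real s / real N)" by simp
    also have "\<dots> \<le> pi * (1/5 + 1/64)"
    proof (rule mult_left_mono)
      have "1 / real M \<le> 1/5" using rM by (simp add: divide_le_eq)
      moreover have "1 / real N \<le> 1/64" using Nbig by (simp add: divide_le_eq)
      ultimately show "real s / real N \<le> 1/5 + 1/64" using s_over_N by linarith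
    qed simp
    also have "\<dots> \<le> 1" using pi_less_4 by simp
    finally show ?thesis .
  qed
  obtain y where y1: "vec_norm2 R y = 1"
    and yb: "pi - 4*pi*real s/real N - 2*pi*real N/4^k - pi/(16*real R) \<le> vec_norm2 R (T_apply R y)"
    using test_vector[OF R1 N_def _ deg s1 sM sN] M5 by auto
  have Ty: "vec_norm2 R (T_apply R y) \<le> T_opnorm R" by (rule opnorm_facts(2)[OF R1 y1])
  have main: "pi - T_opnorm R \<le> 4*pi*real s/real N + 2*pi*real N/4^k + pi/(16*real R)"
    using yb Ty by simp
  have t1: "4*pi*real s/real N \<le> 4*pi*real k/real R + pi/(4*real R)"
  proof -
    have "4*pi*real s/real N = 4*pi*(real s / real N)" by simp
    also have "\<dots> \<le> 4*pi*(1 / real M + 1 / real N)" using s_over_N by (intro mult_left_mono) auto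
    also have "1 / real M \<le> real k / real R"
    proof -
      have "real R \<le> real M * real k" using Mk by (simp add: of_nat_mult[symmetric] del: of_nat_mult)
      thus ?thesis using rM rR by (simp add: field_simps)
    qed
    hence "4*pi*(1 / real M + 1 / real N) \<le> 4*pi*(real k / real R + 1 / real N)" by (intro mult_left_mono) auto
    also have "4*pi*(real k / real R + 1 / real N) = 4*pi*real k/real R + pi/(4*real R) * (1 / real R)"
      unfolding rN using rR by (simp add: field_simps power2_eq_square)
    also have "pi/(4*real R) * (1 / real R) \<le> pi/(4*real R) * 1"
      using rR by (intro mult_left_mono) auto
    finally show ?thesis by simp
  qed
  have t2: "2*pi*real N/4^k \<le> pi/(2*real R)"
  proof -
    have e1: "(4::real)^k = 2^(2*k)" by (subst power_mult) simp
    have e2: "((2::real)^k0)^4 = 2^(k0*4)" by (simp add: power_mult)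
    have e3: "2*k = k0*4" unfolding k_def by simp
    have "(4::real)^k = ((2::real)^k0)^4" by (simp only: e1 e3 e2)
    moreover have "real R ^ 4 \<le> ((2::real)^k0)^4"
    proof (rule power_mono)
      have "real R \<le> real (2^k0)" using k0a by (simp only: of_nat_le_iff)
      thus "real R \<le> (2::real)^k0" by simp
    qed simp
    ultimately have p4: "real R ^ 4 \<le> (4::real)^k" by simp
    have "2*pi*real N/4^k \<le> 2*pi*real N / real R ^ 4"
      using p4 rR N0 by (intro divide_left_mono) auto
    also have "\<dots> = pi/(2*real R) * (64 / real R)" unfolding rN using rR by (simp add: field_simps power2_eq_square power4_eq_xxxx)
    also have "\<dots> \<le> pi/(2*real R) * 1" using rR by (intro mult_left_mono) auto
    finally show ?thesis by simp
  qed
  have lnR: "1 \<le> ln (real R)"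
  proof -
    have "exp 1 \<le> real R" using exp_le rR by linarith
    hence "ln (exp 1) \<le> ln (real R)" using rR by (subst ln_le_cancel_iff) auto
    thus ?thesis by simp
  qed
  have k0ln: "real k0 \<le> 1 + 2 * ln (real R)"
  proof -
    have "real (2^k0) < real (2*R)" using k0b by (simp only: of_nat_less_iff)
    hence "(2::real)^k0 < 2 * real R" by simp
    hence "ln ((2::real)^k0) < ln (2 * real R)" using rR by (subst ln_less_cancel_iff) auto
    hence "real k0 * ln 2 < ln 2 + ln (real R)" using rR by (simp add: ln_realpow ln_mult)
    hence "(real k0 - 1) * ln 2 < ln (real R)" by (simp add: algebra_simps)
    moreover have "(real k0 - 1) * (1/2) \<le> (real k0 - 1) * ln 2 \<or> real k0 < 1"
    proof (cases "real k0 \<ge> 1")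
      case True
      hence "(real k0 - 1) * (1/2) \<le> (real k0 - 1) * ln 2"
        using ln2_half by (intro mult_left_mono) auto
      thus ?thesis by simp
    qed simp
    ultimately show ?thesis using lnR by auto
  qed
  have eq: "(4*pi*real k + pi/4 + pi/2 + pi/16) / real R = 4*pi*real k/real R + pi/(4*real R) + pi/(2*real R) + pi/(16*real R)"
    using rR by (simp add: add_divide_distrib)
  have "pi - T_opnorm R \<le> (4*pi*real k + pi/4 + pi/2 + pi/16) / real R"
    unfolding eq using main t1 t2 by linarith
  also have "\<dots> < 1000 * ln (real R) / real R"
  proof (rule divide_strict_right_mono)
    have "4*pi*real k + pi/4 + pi/2 + pi/16 \<le> 4*4*(2 + 4*ln (real R)) + 4"
    proof -
      have "real k \<le> 2 + 4*ln (real R)" using k0ln unfolding k_def by simp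
      moreover have "0 \<le> real k" by simp
      ultimately have "pi * real k \<le> 4 * (2 + 4*ln (real R))"
        using pi_less_4 lnR by (intro mult_mono) auto
      thus ?thesis using pi_less_4 by simp
    qed
    also have "\<dots> < 1000 * ln (real R)" using lnR by simp
    finally show "4*pi*real k + pi/4 + pi/2 + pi/16 < 1000 * ln (real R)" .
  qed (use rR in simp)
  finally show ?thesis .
qed

theorem mainTheorem13:
  shows "\<exists>a b :: real. a > 0 \<and> b > 0 \<and>
    (\<forall>R::nat. R \<ge> 2 \<longrightarrow>
       a / real R < pi - T_opnorm R \<and> pi - T_opnorm R < b * ln (real R) / real R)"
proof -
  have "\<forall>R::nat. R \<ge> 2 \<longrightarrow> pi/32 / real R < pi - T_opnorm R \<and> pi - T_opnorm R < 1000 * ln (real R) / real R"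
  proof (intro allI impI conjI)
  fix R :: nat assume R2: "R \<ge> 2"
  have R1: "R \<ge> 1" using R2 by simp
  have rR: "real R \<ge> 2" using R2 by simp
  have up: "T_opnorm R \<le> pi - pi/(16*real R)" by (rule opnorm_facts(1)[OF R1])
  have "pi/32 / real R < pi/(16*real R)" using rR by (simp add: field_simps)
  thus "pi/32 / real R < pi - T_opnorm R" using up by linarith
  show "pi - T_opnorm R < 1000 * ln (real R) / real R"
  proof (cases "R \<ge> 64")
    case True thus ?thesis by (rule large_R)
  next
    case False
    hence rR64: "real R < 64" by simp
    have T0: "0 \<le> T_opnorm R" by (rule opnorm_facts(3)[OF R1])
    have "ln 2 \<le> ln (real R)" using rR by (subst ln_le_cancel_iff) auto
    hence lnR: "1/2 < ln (real R)" using ln2_half by linarith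
    have "4 * real R < 1000 * ln (real R)" using lnR rR64 by linarith
    hence "4 < 1000 * ln (real R) / real R" using rR by (simp add: less_divide_eq)
    thus ?thesis using T0 pi_less_4 by linarith
  qed
  qed
  thus ?thesis by (intro exI[of _ "pi/32"] exI[of _ "1000::real"]) simp
qed

end
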